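(* Suppose $\mathit{Act}$ is finite. Then $\mathcal{E}_{v,f}'$ is sound modulo $\simeq$: for all monitors $m,n$, if $\mathcal{E}_{v,f}'\vdash m=n$ then $m\simeq n$.
   Context: Monitors: terms $m,n ::= v \mid a.m \mid m+n \mid x$ over a finite nonempty action set $\mathit{Act}$ and variables $x$, verdicts $v::=\mathit{end}\mid\mathit{yes}\mid\mathit{no}$. $\sum_{i\in I}m_i$ is $\mathit{end}$ for $I=\emptyset$. Semantics: $\xrightarrow{\alpha}$ ($\alpha\in\mathit{Act}\cup\{\tau\}$) is the least relation with $a.m\xrightarrow{a}m$; $m\xrightarrow{\alpha}m'$ implies $m+n\xrightarrow{\alpha}m'$ and $n+m\xrightarrow{\alpha}m'$; $v\xrightarrow{\alpha}v$ for verdicts $v$. Weak transitions: $m\xRightarrow{\varepsilon}m'$ iff $m(\xrightarrow{\tau})^*m'$; $m\xRightarrow{a}m'$ iff $m\xRightarrow{\varepsilon}\xrightarrow{a}\xRightarrow{\varepsilon}m'$; $m\xRightarrow{as'}m'$ ($s'\ne\varepsilon$) iff $m\xRightarrow{a}m_1\xRightarrow{s'}m'$. For closed $m$, $L_a(m)=\{s\mid m\xRightarrow{s}\mathit{yes}\}$, $L_r(m)=\{s\mid m\xRightarrow{s}\mathit{no}\}$; $m\simeq n$ iff $L_a,L_r$ coincide for closed terms, and iff $\sigma(m)\simeq\sigma(n)$ for all closed substitutions $\sigma$ for open terms. Notation for $s\in\mathit{Act}^*$: $s.m$ is $a_1.(\cdots a_k.m)$ if $s=a_1\dots a_k$ ($\varepsilon.m=m$);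 $s^1=s$, $s^i=s s^{i-1}$; $\mathit{pre}(s)$ is the set of prefixes of $s$ (including $\varepsilon$ and $s$); $\overline{s}^{\le}(m)=\sum_{s'\in\mathit{Act}^*,\ |s'|\le|s|,\ s'\notin\mathit{pre}(s)}s'.m$; $\overline{s}(m)=\overline{s}^{\le}(m)+s.\sum_{a\in\mathit{Act}}a.m$; for $k\ge1$, $\overline{s}^{(1)}(m)=\overline{s}(m)$ and for $k\ge2$, $\overline{s}^{(k)}(m)=\sum_{1\le i<k-1}s^i.\overline{s}^{\le}(m)+s^{k-1}.\overline{s}(m)$. $\mathcal{E}\vdash m=n$ denotes derivability by reflexivity, symmetry, transitivity, substitution and congruence for $a.\_$ and $+$. $\mathcal{E}_v$: (A1) $x+y=y+x$; (A2) $x+(y+z)=(x+y)+z$; (A3) $x+x=x$; (A4) $x+\mathit{end}=x$; for each $a\in\mathit{Act}$: ($E_a$) $a.\mathit{end}=\mathit{end}$; ($Y_a$) $\mathit{yes}=\mathit{yes}+a.\mathit{yes}$; ($N_a$) $\mathit{no}=\mathit{no}+a.\mathit{no}$; ($D_a$) $a.(x+y)=a.x+a.y$. $\mathcal{E}_v'=\mathcal{E}_v\cup\{O1\}$ with (O1) $\mathit{yes}+\mathit{no}=\mathit{yes}+\mathit{no}+x$. $\mathcal{O}=\{O2_{s,k}\mid s\in\mathit{Act}^*,k\ge1\}$ with ($O2_{s,k}$) $x+s.x+\overline{s}^{(k)}(\mathit{yes}+\mathit{no})=x+\overline{s}^{(k)}(\mathit{yes}+\mathit{no})$. $\mathcal{E}_{v,f}'=\mathcal{E}_v'\cup\mathcal{O}$.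 *)

theory Defs
  imports Main "HOL-Library.Sublist"
begin

datatype verdict = End | Yes | No

datatype 'a mon =
    Verd verdict
  | Pre 'a "'a mon"
  | Sum "'a mon" "'a mon"
  | Var nat

text \<open>Actions: Some a = visible action a, None = tau.\<close>

inductive step :: "'a mon \<Rightarrow> 'a option \<Rightarrow> 'a mon \<Rightarrow> bool" where
  step_pre: "step (Pre a m) (Some a) m"
| step_suml: "step m \<alpha> m' \<Longrightarrow> step (Sum m n) \<alpha> m'"
| step_sumr: "step m \<alpha> m' \<Longrightarrow> step (Sum n m) \<alpha> m'"
| step_verd: "step (Verd v) \<alpha> (Verd v)"

definition wtau :: "'a mon \<Rightarrow> 'a mon \<Rightarrow> bool" where
  "wtau = (\<lambda>m m'. step m None m')\<^sup>*\<^sup>*"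

definition wact :: "'a mon \<Rightarrow> 'a \<Rightarrow> 'a mon \<Rightarrow> bool" where
  "wact m a m' = (\<exists>m1 m2. wtau m m1 \<and> step m1 (Some a) m2 \<and> wtau m2 m')"

fun wtrans :: "'a mon \<Rightarrow> 'a list \<Rightarrow> 'a mon \<Rightarrow> bool" where
  "wtrans m [] m' = wtau m m'"
| "wtrans m [a] m' = wact m a m'"
| "wtrans m (a # b # s) m' = (\<exists>m1. wact m a m1 \<and> wtrans m1 (b # s) m')"

definition La :: "'a mon \<Rightarrow> 'a list set" where
  "La m = {s. wtrans m s (Verd Yes)}"

definition Lr :: "'a mon \<Rightarrow> 'a list set" where
  "Lr m = {s. wtrans m s (Verd No)}"

fun fv :: "'a mon \<Rightarrow> nat set" where
  "fv (Verd v) = {}"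
| "fv (Pre a m) = fv m"
| "fv (Sum m n) = fv m \<union> fv n"
| "fv (Var x) = {x}"

definition closed :: "'a mon \<Rightarrow> bool" where
  "closed m = (fv m = {})"

fun subst :: "(nat \<Rightarrow> 'a mon) \<Rightarrow> 'a mon \<Rightarrow> 'a mon" where
  "subst \<sigma> (Verd v) = Verd v"
| "subst \<sigma> (Pre a m) = Pre a (subst \<sigma> m)"
| "subst \<sigma> (Sum m n) = Sum (subst \<sigma> m) (subst \<sigma> n)"
| "subst \<sigma> (Var x) = \<sigma> x"

definition meq :: "'a mon \<Rightarrow> 'a mon \<Rightarrow> bool" where
  "meq m n = (if closed m \<and> closed n then La m = La n \<and> Lr m = Lr n
     else (\<forall>\<sigma>. (\<forall>x. closed (\<sigma> x)) \<longrightarrow>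
             La (subst \<sigma> m) = La (subst \<sigma> n) \<and> Lr (subst \<sigma> m) = Lr (subst \<sigma> n)))"

fun sumlist :: "'a mon list \<Rightarrow> 'a mon" where
  "sumlist [] = Verd End"
| "sumlist [m] = m"
| "sumlist (m # n # ms) = Sum m (sumlist (n # ms))"

definition msum :: "'a mon set \<Rightarrow> 'a mon" where
  "msum S = sumlist (SOME xs. distinct xs \<and> set xs = S)"

definition pref :: "'a list \<Rightarrow> 'a mon \<Rightarrow> 'a mon" where
  "pref s m = foldr Pre s m"

definition lpow :: "'a list \<Rightarrow> nat \<Rightarrow> 'a list" where
  "lpow s i = concat (replicate i s)"

definition sbar_le :: "'a list \<Rightarrow> 'a mon \<Rightarrow> 'a mon" where
  "sbar_le s m = msum {pref s' m | s'. length s' \<le> length s \<and> \<not> prefix s' s}"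

definition sbar :: "'a list \<Rightarrow> 'a mon \<Rightarrow> 'a mon" where
  "sbar s m = Sum (sbar_le s m) (pref s (msum {Pre a m | a. a \<in> UNIV}))"

definition sbar_k :: "'a list \<Rightarrow> nat \<Rightarrow> 'a mon \<Rightarrow> 'a mon" where
  "sbar_k s k m = (if k = 1 then sbar s m
     else Sum (msum {pref (lpow s i) (sbar_le s m) | i. 1 \<le> i \<and> i < k - 1})
              (pref (lpow s (k - 1)) (sbar s m)))"

abbreviation "vx \<equiv> Var 0"
abbreviation "vy \<equiv> Var 1"
abbreviation "vz \<equiv> Var 2"
abbreviation "yes \<equiv> Verd Yes"
abbreviation "no \<equiv> Verd No"
abbreviation "endm \<equiv> Verd End"

definition Ev :: "('a mon \<times> 'a mon) set" where
  "Ev = {(Sum vx vy, Sum vy vx),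
         (Sum vx (Sum vy vz), Sum (Sum vx vy) vz),
         (Sum vx vx, vx),
         (Sum vx endm, vx)}
      \<union> (\<Union>a. {(Pre a endm, endm),
               (yes, Sum yes (Pre a yes)),
               (no, Sum no (Pre a no)),
               (Pre a (Sum vx vy), Sum (Pre a vx) (Pre a vy))})"

definition Ev' :: "('a mon \<times> 'a mon) set" where
  "Ev' = Ev \<union> {(Sum yes no, Sum (Sum yes no) vx)}"

definition O2 :: "('a mon \<times> 'a mon) set" where
  "O2 = {(Sum (Sum vx (pref s vx)) (sbar_k s k (Sum yes no)),
          Sum vx (sbar_k s k (Sum yes no))) | s k. k \<ge> 1}"

definition Evf' :: "('a mon \<times> 'a mon) set" where
  "Evf' = Ev' \<union> O2"

inductive deriv :: "('a mon \<times> 'a mon) set \<Rightarrow> 'a mon \<Rightarrow> 'a mon \<Rightarrow> bool"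
  for E :: "('a mon \<times> 'a mon) set" where
  d_ax: "(m, n) \<in> E \<Longrightarrow> deriv E m n"
| d_refl: "deriv E m m"
| d_sym: "deriv E m n \<Longrightarrow> deriv E n m"
| d_trans: "deriv E m n \<Longrightarrow> deriv E n p \<Longrightarrow> deriv E m p"
| d_subst: "deriv E m n \<Longrightarrow> deriv E (subst \<sigma> m) (subst \<sigma> n)"
| d_pre: "deriv E m n \<Longrightarrow> deriv E (Pre a m) (Pre a n)"
| d_sum: "deriv E m m' \<Longrightarrow> deriv E n n' \<Longrightarrow> deriv E (Sum m n) (Sum m' n')"

end

theory Submission
  imports Defs
begin

lemma step_Verd[simp]: "step (Verd v) al m' \<longleftrightarrow> m' = Verd v"
  by (auto elim: step.cases intro: step.intros)
lemma step_Pre[simp]: "step (Pre a m) al m' \<longleftrightarrow> al = Some a \<and> m' = m"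
  by (auto elim: step.cases intro: step.intros)
lemma step_Sum[simp]: "step (Sum m n) al m' \<longleftrightarrow> step m al m' \<or> step n al m'"
  by (auto elim: step.cases intro: step.intros)
lemma step_Var[simp]: "\<not> step (Var x) al m'"
  by (auto elim: step.cases)

lemma wtau_refl[simp]: "wtau m m" unfolding wtau_def by simp
lemma wtau_trans: "wtau m m1 \<Longrightarrow> wtau m1 m2 \<Longrightarrow> wtau m m2"
  unfolding wtau_def by (rule rtranclp_trans)

lemma wtau_Verd[simp]: "wtau (Verd v) m' \<longleftrightarrow> m' = Verd v"
proof
  assume "wtau (Verd v) m'" thus "m' = Verd v" unfolding wtau_def
    by (induction rule: rtranclp_induct) auto
qed simp

lemma wtau_Pre[simp]: "wtau (Pre a m) m' \<longleftrightarrow> m' = Pre a m"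
  unfolding wtau_def by (auto elim: converse_rtranclpE)
lemma wtau_Var[simp]: "wtau (Var x) m' \<longleftrightarrow> m' = Var x"
  unfolding wtau_def by (auto elim: converse_rtranclpE)

lemma wtau_SumD: assumes "wtau (Sum m n) m'" shows "m' = Sum m n \<or> wtau m m' \<or> wtau n m'"
proof -
  have "(\<lambda>m m'. step m None m')\<^sup>*\<^sup>* (Sum m n) m'" using assms unfolding wtau_def .
  then show ?thesis
  proof (rule converse_rtranclpE)
    fix z assume "step (Sum m n) None z" "(\<lambda>m m'. step m None m')\<^sup>*\<^sup>* z m'"
    then show ?thesis unfolding wtau_def by (auto intro: converse_rtranclp_into_rtranclp)
  qed simp
qed

lemma wtau_SumIl: assumes "wtau m m'" "m' \<noteq> m" shows "wtau (Sum m n) m'"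
proof -
  have "(\<lambda>m m'. step m None m')\<^sup>*\<^sup>* m m'" using assms unfolding wtau_def by simp
  then show ?thesis
  proof (rule converse_rtranclpE)
    fix z assume "step m None z" "(\<lambda>m m'. step m None m')\<^sup>*\<^sup>* z m'"
    then show ?thesis unfolding wtau_def by (auto intro: converse_rtranclp_into_rtranclp)
  qed (use assms in simp)
qed

lemma wtau_SumIr: assumes "wtau n m'" "m' \<noteq> n" shows "wtau (Sum m n) m'"
proof -
  have "(\<lambda>m m'. step m None m')\<^sup>*\<^sup>* n m'" using assms unfolding wtau_def by simp
  then show ?thesis
  proof (rule converse_rtranclpE)
    fix z assume "step n None z" "(\<lambda>m m'. step m None m')\<^sup>*\<^sup>* z m'"
    then show ?thesis unfolding wtau_def by (auto intro: converse_rtranclp_into_rtranclp)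
  qed (use assms in simp)
qed

lemma wtrans_Cons: "wtrans m (a # s) x \<longleftrightarrow> (\<exists>m1. wact m a m1 \<and> wtrans m1 s x)"
proof (cases s)
  case Nil
  then show ?thesis by (simp add: wact_def) (blast intro: wtau_trans wtau_refl)
qed simp

declare wtrans.simps(2,3)[simp del]

lemma wact_Verd[simp]: "wact (Verd v) a x \<longleftrightarrow> x = Verd v"
  by (auto simp: wact_def)
lemma wact_Pre[simp]: "wact (Pre b m) a x \<longleftrightarrow> a = b \<and> wtau m x"
  by (auto simp: wact_def)
lemma wact_Var[simp]: "\<not> wact (Var y) a x"
  by (auto simp: wact_def)
lemma wact_Sum[simp]: "wact (Sum m n) a x \<longleftrightarrow> wact m a x \<or> wact n a x"
proof
  assume "wact (Sum m n) a x"
  then obtain m1 m2 where h: "wtau (Sum m n) m1" "step m1 (Some a) m2" "wtau m2 x"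
    unfolding wact_def by blast
  from wtau_SumD[OF h(1)] show "wact m a x \<or> wact n a x"
  proof (elim disjE)
    assume "m1 = Sum m n"
    then have "step m (Some a) m2 \<or> step n (Some a) m2" using h by simp
    then show ?thesis using h(3) unfolding wact_def by (meson wtau_refl)
  qed (use h in \<open>auto simp: wact_def\<close>)
next
  assume "wact m a x \<or> wact n a x"
  then show "wact (Sum m n) a x"
  proof
    assume "wact m a x"
    then obtain m1 m2 where h: "wtau m m1" "step m1 (Some a) m2" "wtau m2 x"
      unfolding wact_def by blast
    show ?thesis
    proof (cases "m1 = m")
      case True then show ?thesis using h unfolding wact_def
        by (intro exI[of _ "Sum m n"] exI[of _ m2]) auto
    next
      case False then show ?thesis using h wtau_SumIl unfolding wact_def by blast
    qed
  next
    assume "wact n a x"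
    then obtain m1 m2 where h: "wtau n m1" "step m1 (Some a) m2" "wtau m2 x"
      unfolding wact_def by blast
    show ?thesis
    proof (cases "m1 = n")
      case True then show ?thesis using h unfolding wact_def
        by (intro exI[of _ "Sum m n"] exI[of _ m2]) auto
    next
      case False then show ?thesis using h wtau_SumIr unfolding wact_def by blast
    qed
  qed
qed

lemma wtau_wtrans: "wtau m m1 \<Longrightarrow> wtrans m1 s x \<Longrightarrow> wtrans m s x"
  by (cases s) (auto simp: wtrans_Cons wact_def intro: wtau_trans)

definition Lv :: "verdict \<Rightarrow> 'a mon \<Rightarrow> 'a list set" where
  "Lv v m = {s. wtrans m s (Verd v)}"

lemma Lv_Verd[simp]: "Lv v (Verd v') = (if v = v' then UNIV else {})"
proof -
  have "wtrans (Verd v') s x \<longleftrightarrow> x = Verd v'" for s x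
    by (induction s arbitrary: x) (auto simp: wtrans_Cons)
  then show ?thesis unfolding Lv_def by auto
qed

lemma Lv_Var[simp]: "Lv v (Var y) = {}"
proof -
  have "\<not> wtrans (Var y) s (Verd v)" for s by (cases s) (auto simp: wtrans_Cons)
  then show ?thesis unfolding Lv_def by auto
qed

lemma Lv_Pre[simp]: "Lv v (Pre a m) = Cons a ` Lv v m"
proof -
  have "wtrans (Pre a m) s (Verd v) \<longleftrightarrow> (\<exists>s'. s = a # s' \<and> wtrans m s' (Verd v))" for s
    by (cases s) (force simp: wtrans_Cons intro: wtau_wtrans wtau_refl)+
  then show ?thesis unfolding Lv_def by auto
qed

lemma Lv_Sum[simp]: "Lv v (Sum m n) = Lv v m \<union> Lv v n"
proof -
  have "wtrans (Sum m n) s (Verd v) \<longleftrightarrow> wtrans m s (Verd v) \<or> wtrans n s (Verd v)" for s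
  proof (cases s)
    case Nil
    have "wtau (Sum m n) (Verd v) \<longleftrightarrow> wtau m (Verd v) \<or> wtau n (Verd v)"
    proof
      assume "wtau (Sum m n) (Verd v)" then show "wtau m (Verd v) \<or> wtau n (Verd v)"
        using wtau_SumD by blast
    next
      have s1: "wtau (Sum (Verd v) n) (Verd v)" unfolding wtau_def
        by (rule r_into_rtranclp) (auto intro: step.intros)
      have s2: "wtau (Sum m (Verd v)) (Verd v)" unfolding wtau_def
        by (rule r_into_rtranclp) (auto intro: step.intros)
      assume "wtau m (Verd v) \<or> wtau n (Verd v)"
      then show "wtau (Sum m n) (Verd v)"
        using s1 s2 wtau_SumIl wtau_SumIr by metis
    qed
    then show ?thesis using Nil by simp
  next
    case (Cons a s') then show ?thesis by (auto simp: wtrans_Cons)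
  qed
  then show ?thesis unfolding Lv_def by auto
qed


lemma Lv_ext: "w \<in> Lv v m \<Longrightarrow> w @ t \<in> Lv v m"
  by (induction m arbitrary: w) (auto split: if_splits)

lemma Lv_pref[simp]: "Lv v (pref t m) = (\<lambda>w. t @ w) ` Lv v m"
  unfolding pref_def by (induction t) (simp_all add: image_image)
lemma fv_pref[simp]: "fv (pref t m) = fv m"
  unfolding pref_def by (induction t) simp_all
lemma subst_pref[simp]: "subst \<sigma> (pref t m) = pref t (subst \<sigma> m)"
  unfolding pref_def by (induction t) simp_all

lemma Lv_sumlist: "v \<noteq> End \<Longrightarrow> Lv v (sumlist xs) = (\<Union>x\<in>set xs. Lv v x)"
  by (induction xs rule: sumlist.induct) auto
lemma fv_sumlist: "fv (sumlist xs) = (\<Union>x\<in>set xs. fv x)"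
  by (induction xs rule: sumlist.induct) auto

lemma msum_set: "finite S \<Longrightarrow> set (SOME xs. distinct xs \<and> set xs = S) = S"
  using someI_ex[of "\<lambda>xs. distinct xs \<and> set xs = S"] finite_distinct_list by blast

lemma Lv_msum: "finite S \<Longrightarrow> v \<noteq> End \<Longrightarrow> Lv v (msum S) = (\<Union>x\<in>S. Lv v x)"
  unfolding msum_def by (simp add: Lv_sumlist msum_set)
lemma fv_msum: "finite S \<Longrightarrow> fv (msum S) = (\<Union>x\<in>S. fv x)"
  unfolding msum_def by (simp add: fv_sumlist msum_set)

lemma subst_closed: "fv m = {} \<Longrightarrow> subst \<sigma> m = m"
  by (induction m) auto
lemma subst_subst: "subst \<sigma> (subst \<tau> m) = subst (\<lambda>x. subst \<sigma> (\<tau> x)) m"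
  by (induction m) auto
lemma subst_Var: "subst Var m = m"
  by (induction m) auto
lemma fv_subst_closed: "(\<forall>x. closed (\<sigma> x)) \<Longrightarrow> closed (subst \<sigma> m)"
  unfolding closed_def by (induction m) auto

abbreviation "Full \<equiv> Sum yes no"

lemma fin_le: "finite {pref s' (m::'a::finite mon) | s'. length s' \<le> length s \<and> \<not> prefix s' s}"
proof -
  have "{pref s' m | s'. length s' \<le> length s \<and> \<not> prefix s' s}
     \<subseteq> (\<lambda>s'. pref s' m) ` {xs. set xs \<subseteq> UNIV \<and> length xs \<le> length s}" by auto
  then show ?thesis
    using finite_subset finite_imageI finite_lists_length_le[OF finite_UNIV] by blast
qed

lemma fin_pre: "finite {Pre a (m::'a::finite mon) | a. a \<in> UNIV}"
proof -
  have "{Pre a m | a. a \<in> UNIV} = range (\<lambda>a. Pre a m)" by auto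
  then show ?thesis by simp
qed

lemma fin_k: "finite {pref (lpow s i) M | i. 1 \<le> i \<and> i < k - 1}"
proof -
  have "{pref (lpow s i) M | i. 1 \<le> i \<and> i < k - 1} \<subseteq> (\<lambda>i. pref (lpow s i) M) ` {..<k}" by auto
  then show ?thesis using finite_subset by blast
qed

lemma fv_sbar_k: "fv (sbar_k s k (Full::'a::finite mon)) = {}"
proof -
  have le: "fv (sbar_le s (Full::'a mon)) = {}"
    unfolding sbar_le_def by (auto simp: fv_msum[OF fin_le])
  have b: "fv (sbar s (Full::'a mon)) = {}"
  proof -
    have "fv (msum {Pre a (Full::'a mon) | a. a \<in> UNIV}) = {}"
      by (subst fv_msum[OF fin_pre]) auto
    then show ?thesis unfolding sbar_def using le by simp
  qed
  have "fv (msum {pref (lpow s i) (sbar_le s (Full::'a mon)) | i. 1 \<le> i \<and> i < k - 1}) = {}"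
    by (subst fv_msum[OF fin_k]) (use le in auto)
  then show ?thesis unfolding sbar_k_def using le b by simp
qed

lemma Lv_Full: "v = Yes \<or> v = No \<Longrightarrow> Lv v Full = UNIV"
  by auto

lemma mem_le:
  fixes s :: "'a::finite list"
  assumes V: "v = Yes \<or> v = No" and "length s' \<le> length s" "\<not> prefix s' s"
  shows "s' @ z \<in> Lv v (sbar_le s Full)"
proof -
  have "pref s' Full \<in> {pref s' (Full::'a mon) | s'. length s' \<le> length s \<and> \<not> prefix s' s}"
    using assms by auto
  moreover have "s' @ z \<in> Lv v (pref s' Full)" using V by auto
  moreover have "Lv v (sbar_le s Full) = (\<Union>x\<in>{pref s' (Full::'a mon) | s'. length s' \<le> length s \<and> \<not> prefix s' s}. Lv v x)"
    unfolding sbar_le_def by (rule Lv_msum[OF fin_le]) (use V in auto)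
  ultimately show ?thesis by blast
qed

lemma mem_bar2:
  fixes s :: "'a::finite list"
  assumes V: "v = Yes \<or> v = No"
  shows "s @ a # z \<in> Lv v (sbar s Full)"
proof -
  have "Lv v (msum {Pre a (Full::'a mon) | a. a \<in> UNIV}) = (\<Union>x\<in>{Pre a (Full::'a mon) | a. a \<in> UNIV}. Lv v x)"
    by (rule Lv_msum[OF fin_pre]) (use V in auto)
  moreover have "a # z \<in> Lv v (Pre a Full)" using V by auto
  ultimately have "a # z \<in> Lv v (msum {Pre a (Full::'a mon) | a. a \<in> UNIV})" by blast
  then show ?thesis unfolding sbar_def by auto
qed

lemma lemB:
  fixes s :: "'a::finite list"
  assumes V: "v = Yes \<or> v = No" and "\<not> prefix w s" "\<not> prefix s w"
  shows "w \<in> Lv v (sbar_le s Full)"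
proof (cases "length w \<le> length s")
  case True
  then show ?thesis using mem_le[OF V True assms(2), of "[]"] by simp
next
  case False
  define s' where "s' = take (length s) w"
  have w: "w = s' @ drop (length s) w" unfolding s'_def by simp
  have l: "length s' = length s" unfolding s'_def using False by simp
  have np: "\<not> prefix s' s"
  proof
    assume "prefix s' s"
    then have "s' = s" using l prefix_length_le prefix_order.antisym
      by (metis prefix_length_prefix prefix_order.refl)
    then show False using assms(3) w by (metis prefixI)
  qed
  have "s' @ drop (length s) w \<in> Lv v (sbar_le s Full)" using mem_le[OF V _ np] l by simp
  then show ?thesis using w by simp
qed

lemma lemA:
  fixes s :: "'a::finite list"
  assumes V: "v = Yes \<or> v = No" and "\<not> prefix w s"
  shows "w \<in> Lv v (sbar s Full)"
proof (cases "prefix s w")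
  case True
  then obtain r where r: "w = s @ r" by (auto simp: prefix_def)
  with assms(2) obtain a z where "r = a # z" by (cases r) auto
  then show ?thesis using mem_bar2[OF V] r by simp
next
  case False
  then show ?thesis using lemB[OF V assms(2) False] unfolding sbar_def by simp
qed


lemma lpow_Suc: "lpow s (Suc i) = s @ lpow s i"
  unfolding lpow_def by simp
lemma lpow_Suc': "lpow s (Suc i) = lpow s i @ s"
  unfolding lpow_def by (simp add: replicate_append_same[symmetric])
lemma lpow_1[simp]: "lpow s (Suc 0) = s"
  unfolding lpow_def by simp

lemma mk2:
  fixes s :: "'a::finite list"
  assumes V: "v = Yes \<or> v = No" and k: "k \<ge> 2" and w: "w \<in> Lv v (sbar s Full)"
  shows "lpow s (k - 1) @ w \<in> Lv v (sbar_k s k Full)"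
  using k w unfolding sbar_k_def by auto

lemma mk3:
  fixes s :: "'a::finite list"
  assumes V: "v = Yes \<or> v = No" and i: "1 \<le> i" "i < k - 1" and w: "w \<in> Lv v (sbar_le s Full)"
  shows "lpow s i @ w \<in> Lv v (sbar_k s k Full)"
proof -
  have "Lv v (msum {pref (lpow s i) (sbar_le s (Full::'a mon)) | i. 1 \<le> i \<and> i < k - 1})
     = (\<Union>x\<in>{pref (lpow s i) (sbar_le s (Full::'a mon)) | i. 1 \<le> i \<and> i < k - 1}. Lv v x)"
    by (rule Lv_msum[OF fin_k]) (use V in auto)
  moreover have "lpow s i @ w \<in> Lv v (pref (lpow s i) (sbar_le s Full))" using w by simp
  ultimately have "lpow s i @ w \<in> Lv v (msum {pref (lpow s i) (sbar_le s (Full::'a mon)) | i. 1 \<le> i \<and> i < k - 1})"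
    using i by blast
  moreover have "k \<noteq> 1" using i by simp
  ultimately show ?thesis unfolding sbar_k_def by simp
qed

lemma Mprime:
  fixes s :: "'a::finite list"
  assumes V: "v = Yes \<or> v = No" and k: "k \<ge> 2"
  shows "\<forall>i t. k - 1 - i = d \<longrightarrow> 1 \<le> i \<longrightarrow> i \<le> k - 1 \<longrightarrow>
           lpow s i @ t \<notin> Lv v (sbar_k s k Full) \<longrightarrow> prefix t (lpow s (k - i))"
proof (induction d)
  case 0
  show ?case
  proof (intro allI impI)
    fix i t assume h: "k - 1 - i = 0" "1 \<le> i" "i \<le> k - 1" "lpow s i @ t \<notin> Lv v (sbar_k s k Full)"
    then have ik: "i = k - 1" by simp
    have "t \<notin> Lv v (sbar s Full)" using mk2[OF V k, of t s] h(4) ik by auto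
    then have "prefix t s" using lemA[OF V] by blast
    moreover have "k - i = 1" using ik k by simp
    ultimately show "prefix t (lpow s (k - i))" by simp
  qed
next
  case (Suc d)
  show ?case
  proof (intro allI impI)
    fix i t assume h: "k - 1 - i = Suc d" "1 \<le> i" "i \<le> k - 1" "lpow s i @ t \<notin> Lv v (sbar_k s k Full)"
    have "i < k - 1" using h(1) by simp
    then have "t \<notin> Lv v (sbar_le s Full)" using mk3[OF V h(2), of k t s] h by auto
    then have "prefix t s \<or> prefix s t" using lemB[OF V] by blast
    then show "prefix t (lpow s (k - i))"
    proof
      assume "prefix t s"
      moreover have "k - i = Suc (k - Suc i)" using h(1) by simp
      ultimately show ?thesis by (simp add: lpow_Suc)
    next
      assume "prefix s t"
      then obtain t' where t: "t = s @ t'" by (auto simp: prefix_def)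
      have "lpow s (Suc i) @ t' \<notin> Lv v (sbar_k s k Full)" using h(4) t by (simp add: lpow_Suc')
      moreover have "k - 1 - Suc i = d" "1 \<le> Suc i" "Suc i \<le> k - 1" using h by auto
      ultimately have "prefix t' (lpow s (k - Suc i))" using Suc.IH by blast
      moreover have "k - i = Suc (k - Suc i)" using h(1) by simp
      ultimately show ?thesis using t by (simp add: lpow_Suc)
    qed
  qed
qed

lemma key:
  fixes s :: "'a::finite list"
  assumes V: "v = Yes \<or> v = No" and k: "k \<ge> 1"
  shows "prefix u (s @ u) \<or> s @ u \<in> Lv v (sbar_k s k Full)"
proof (cases "s @ u \<in> Lv v (sbar_k s k Full)")
  case True then show ?thesis by simp
next
  case False
  show ?thesis
  proof (cases "k = 1")
    case True
    then have "s @ u \<notin> Lv v (sbar s Full)" using False unfolding sbar_k_def by simp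
    then have "prefix (s @ u) s" using lemA[OF V] by blast
    then have "length (s @ u) \<le> length s" by (rule prefix_length_le)
    then have "u = []" by simp
    then show ?thesis by simp
  next
    case k1: False
    then have k2: "k \<ge> 2" using k by simp
    have M: "\<forall>i t. k - 1 - i = k - 1 - 1 \<longrightarrow> 1 \<le> i \<longrightarrow> i \<le> k - 1 \<longrightarrow>
           lpow s i @ t \<notin> Lv v (sbar_k s k Full) \<longrightarrow> prefix t (lpow s (k - i))"
      by (rule Mprime[OF V k2])
    have "prefix u (lpow s (k - 1))"
      using M[rule_format, of 1 u] False k2 by simp
    have ke: "lpow s k = s @ lpow s (k - 1)" using k lpow_Suc[of s "k - 1"] by simp
    have ke': "lpow s k = lpow s (k - 1) @ s" using k lpow_Suc'[of s "k - 1"] by simp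
    have p1: "prefix (s @ u) (lpow s k)" unfolding ke using \<open>prefix u (lpow s (k - 1))\<close> by simp
    have "prefix (lpow s (k - 1)) (lpow s k)" unfolding ke' by simp
    then have p2: "prefix u (lpow s k)" using \<open>prefix u (lpow s (k - 1))\<close> by (rule prefix_order.trans[rotated])
    from prefix_same_cases[OF p2 p1] show ?thesis
    proof
      assume "prefix (s @ u) u"
      then have "s = []" using prefix_length_le by fastforce
      then show ?thesis by simp
    qed simp
  qed
qed


lemma ax_Ev: "(m, n) \<in> Ev \<Longrightarrow> v = Yes \<or> v = No \<Longrightarrow> Lv v (subst \<sigma> m) = Lv v (subst \<sigma> n)"
  unfolding Ev_def by (auto simp: image_Un)

lemma ax_O2:
  fixes x :: "'a::finite mon"
  assumes V: "v = Yes \<or> v = No" and k: "k \<ge> 1"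
  shows "Lv v (Sum (Sum x (pref s x)) (sbar_k s k Full)) = Lv v (Sum x (sbar_k s k Full))"
proof -
  have "(\<lambda>w. s @ w) ` Lv v x \<subseteq> Lv v x \<union> Lv v (sbar_k s k Full)"
  proof
    fix w assume "w \<in> (\<lambda>w. s @ w) ` Lv v x"
    then obtain u where u: "u \<in> Lv v x" "w = s @ u" by blast
    from key[OF V k, of u s] show "w \<in> Lv v x \<union> Lv v (sbar_k s k Full)"
    proof
      assume "prefix u (s @ u)"
      then obtain z where "s @ u = u @ z" by (auto simp: prefix_def)
      then show ?thesis using Lv_ext[OF u(1), of z] u(2) by simp
    qed (use u in simp)
  qed
  then show ?thesis by auto
qed

lemma ax_sound:
  fixes m n :: "'a::finite mon"
  assumes "(m, n) \<in> Evf'" "v = Yes \<or> v = No"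
  shows "Lv v (subst \<sigma> m) = Lv v (subst \<sigma> n)"
  using assms(1) unfolding Evf'_def Ev'_def
proof (elim UnE)
  assume "(m, n) \<in> Ev" then show ?thesis using ax_Ev assms(2) by blast
next
  assume "(m, n) \<in> {(Sum yes no, Sum (Sum yes no) vx)}"
  then show ?thesis using assms(2) by auto
next
  assume "(m, n) \<in> O2"
  then obtain s k where mn: "m = Sum (Sum vx (pref s vx)) (sbar_k s k Full)"
     "n = Sum vx (sbar_k s k Full)" "k \<ge> 1" unfolding O2_def by blast
  have c: "subst \<sigma> (sbar_k s k (Full::'a mon)) = sbar_k s k Full"
    by (rule subst_closed[OF fv_sbar_k])
  show ?thesis unfolding mn using c ax_O2[OF assms(2) mn(3), of "\<sigma> 0" s]
    by (simp del: Lv_Sum)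
qed

lemma sound:
  fixes m n :: "'a::finite mon"
  assumes "deriv Evf' m n"
  shows "\<forall>\<sigma> v. v = Yes \<or> v = No \<longrightarrow> Lv v (subst \<sigma> m) = Lv v (subst \<sigma> n)"
  using assms
proof (induction rule: deriv.induct)
  case (d_ax m n) then show ?case using ax_sound by blast
next
  case (d_subst m n \<tau>) then show ?case by (simp add: subst_subst)
qed auto

theorem mainTheorem14:
  fixes m n :: "'a::finite mon"
  assumes "deriv Evf' m n"
  shows "meq m n"
proof -
  note S = sound[OF assms]
  have LaLv: "La t = Lv Yes t" "Lr t = Lv No t" for t :: "'a mon"
    unfolding La_def Lr_def Lv_def by auto
  show ?thesis unfolding meq_def LaLv
  proof -
    have "Lv Yes (subst Var m) = Lv Yes (subst Var n)" "Lv No (subst Var m) = Lv No (subst Var n)"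
      using S by blast+
    then show "if closed m \<and> closed n then Lv Yes m = Lv Yes n \<and> Lv No m = Lv No n
     else (\<forall>\<sigma>. (\<forall>x. closed (\<sigma> x)) \<longrightarrow>
             Lv Yes (subst \<sigma> m) = Lv Yes (subst \<sigma> n) \<and> Lv No (subst \<sigma> m) = Lv No (subst \<sigma> n))"
      using S by (simp add: subst_Var)
  qed
qed

end
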